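(* Let $\mathcal{E}$ be a metric space, $\lambda,\kappa,\mu\colon\mathcal{E}\to[0,\infty)$ continuous, $t\ge0$, $J$ an $\mathcal{E}$-valued càdlàg process and $J_n=J$ for all $n$. If $\{\phi_t(f): f\in\mathcal{S}([0,\infty);\mathcal{E})\}\subset\mathcal{R}(t)$, then $\mathcal{R}(t)$ is a closed interval.
   Context: $\mathcal{S}([0,\infty);\mathcal{E})$ is the set of step functions: càdlàg $f\colon[0,\infty)\to\mathcal{E}$ for which there exist $n\in\mathbb{N}$, $0=t_0<\dots<t_n<\infty$ and $\alpha_0,\dots,\alpha_n\in\mathcal{E}$ with $f=\alpha_i$ on $[t_i,t_{i+1})$ ($i<n$) and $f=\alpha_n$ on $[t_n,\infty)$. $\phi_t(f)=\int_0^t\lambda(f(s))\exp(-\kappa(f(s))\int_s^t\mu(f(r))\,dr)\,ds$. $\mathcal{R}(t)$ is the set of $\gamma\in[0,\infty)$ such that for every $\epsilon>0$ there is $N_\epsilon$ with $\mathbb{P}(\phi_t(J_n)\in(\gamma-\epsilon,\gamma+\epsilon))>0$ for all $n\ge N_\epsilon$. A closed interval here may be unbounded (e.g. $[a,\infty)$). *)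

theory Defs
  imports "HOL-Probability.Probability"
begin

text \<open>Functions on [0,\<infinity>) are represented as total functions real \<Rightarrow> 'e;
  values at negative arguments are irrelevant.\<close>

definition cadlag :: "(real \<Rightarrow> 'e::metric_space) \<Rightarrow> bool" where
  "cadlag f \<longleftrightarrow>
     (\<forall>s\<ge>0. (f \<longlongrightarrow> f s) (at_right s)) \<and>
     (\<forall>s>0. \<exists>l. (f \<longlongrightarrow> l) (at_left s))"

definition step_funs :: "(real \<Rightarrow> 'e::metric_space) set" where
  "step_funs = {f. cadlag f \<and>
     (\<exists>(n::nat) (ts::nat \<Rightarrow> real) (\<alpha>::nat \<Rightarrow> 'e).
        ts 0 = 0 \<and> (\<forall>i<n. ts i < ts (Suc i)) \<and>
        (\<forall>i<n. \<forall>s. ts i \<le> s \<and> s < ts (Suc i) \<longrightarrow> f s = \<alpha> i) \<and>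
        (\<forall>s. ts n \<le> s \<longrightarrow> f s = \<alpha> n))}"

definition phi :: "('e \<Rightarrow> real) \<Rightarrow> ('e \<Rightarrow> real) \<Rightarrow> ('e \<Rightarrow> real) \<Rightarrow> real
    \<Rightarrow> (real \<Rightarrow> 'e) \<Rightarrow> real" where
  "phi lam kap mu t f =
     integral {0..t} (\<lambda>s. lam (f s) * exp (- kap (f s) * integral {s..t} (\<lambda>r. mu (f r))))"

definition Rset :: "'w measure \<Rightarrow> ('e \<Rightarrow> real) \<Rightarrow> ('e \<Rightarrow> real) \<Rightarrow> ('e \<Rightarrow> real) \<Rightarrow> real
    \<Rightarrow> (nat \<Rightarrow> 'w \<Rightarrow> real \<Rightarrow> 'e) \<Rightarrow> real set" where
  "Rset M lam kap mu t Js = {\<gamma>. \<gamma> \<ge> 0 \<and>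
     (\<forall>\<epsilon>>0. \<exists>N. \<forall>n\<ge>N.
        measure M {\<omega> \<in> space M. phi lam kap mu t (Js n \<omega>) \<in> {\<gamma> - \<epsilon> <..< \<gamma> + \<epsilon>}} > 0)}"

text \<open>A (possibly unbounded) closed interval: nonempty, closed, convex subset of the reals.\<close>
definition closed_interval :: "real set \<Rightarrow> bool" where
  "closed_interval S \<longleftrightarrow> S \<noteq> {} \<and> closed S \<and> is_interval S"

end

theory Submission imports Defs begin

lemma rc_seq:
  fixes f :: "real \<Rightarrow> 'e::metric_space"
  assumes rc: "(f \<longlongrightarrow> f s) (at_right s)" and x: "x \<longlonglongrightarrow> s" and ge: "\<And>m. x m \<ge> s"
  shows "(\<lambda>m. f (x m)) \<longlonglongrightarrow> f s"
proof (rule tendstoI)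
  fix e :: real assume e: "e > 0"
  from rc[THEN tendstoD, OF e] obtain b where b: "b > s" "\<And>y. s < y \<Longrightarrow> y < b \<Longrightarrow> dist (f y) (f s) < e"
    using eventually_at_right[of s "s+1"] by auto
  have "eventually (\<lambda>m. x m < b) sequentially"
    using x b(1) by (simp add: order_tendstoD(2))
  then show "eventually (\<lambda>m. dist (f (x m)) (f s) < e) sequentially"
  proof eventually_elim
    case (elim m)
    show ?case
    proof (cases "x m = s")
      case True then show ?thesis using e by simp
    next
      case False then show ?thesis using ge[of m] elim b(2) by auto
    qed
  qed
qed

definition pt :: "real \<Rightarrow> nat \<Rightarrow> real \<Rightarrow> real" where
  "pt T m s = max 0 (min T ((of_int \<lfloor>2^m * s\<rfloor> + 1) / 2^m))"

lemma pt_bounds: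
  assumes "0 \<le> s" "s \<le> T"
  shows "s \<le> pt T m s" "pt T m s \<le> s + 1/2^m" "0 \<le> pt T m s" "pt T m s \<le> T"
proof -
  have p: "(0::real) < 2^m" by simp
  have a: "2^m * s < of_int \<lfloor>2^m * s\<rfloor> + 1" by linarith
  have b: "of_int \<lfloor>2^m * s\<rfloor> \<le> 2^m * s" by linarith
  have a': "s < (of_int \<lfloor>2^m * s\<rfloor> + 1) / 2^m" using a p by (simp add: field_simps)
  have b': "(of_int \<lfloor>2^m * s\<rfloor> + 1) / 2^m \<le> s + 1/2^m" using b p by (simp add: field_simps)
  show "s \<le> pt T m s" "pt T m s \<le> s + 1/2^m" "0 \<le> pt T m s" "pt T m s \<le> T"
    using a' b' assms unfolding pt_def by auto
qed

lemma pt_lim: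
  assumes "0 \<le> s" "s \<le> T"
  shows "(\<lambda>m. pt T m s) \<longlonglongrightarrow> s"
proof (rule tendsto_sandwich[of "\<lambda>_. s" _ _ "\<lambda>m. s + 1/2^m"])
  show "\<forall>\<^sub>F n in sequentially. s \<le> pt T n s" "\<forall>\<^sub>F n in sequentially. pt T n s \<le> s + 1/2^n"
    using pt_bounds[OF assms] by auto
  show "(\<lambda>m. s + 1/2^m) \<longlonglongrightarrow> s"
    using tendsto_add[OF tendsto_const LIMSEQ_inverse_realpow_zero[of 2]]
    by (simp add: divide_inverse power_inverse)
qed simp

lemma joint_meas:
  fixes G :: "'w \<Rightarrow> real \<Rightarrow> 'e::metric_space" and u :: "'e \<Rightarrow> real"
  assumes u: "continuous_on UNIV u"
    and cad: "\<And>\<omega>. \<omega> \<in> space N \<Longrightarrow> cadlag (G \<omega>)"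
    and meas: "\<And>s. s \<ge> 0 \<Longrightarrow> (\<lambda>\<omega>. G \<omega> s) \<in> measurable N borel"
  shows "(\<lambda>(\<omega>,s). indicator {0..T} s * u (G \<omega> s)) \<in> borel_measurable (N \<Otimes>\<^sub>M lborel)"
proof (rule borel_measurable_LIMSEQ_real)
  have ub: "u \<in> borel_measurable borel" using u by (rule borel_measurable_continuous_onI)
  fix m :: nat
  let ?F = "\<lambda>(k::int) (x::'w \<times> real). indicator {0..T} (snd x) * u (G (fst x) (max 0 (min T ((of_int k + 1) / 2^m))))"
  have F: "?F k \<in> borel_measurable (N \<Otimes>\<^sub>M lborel)" for k
  proof -
    have "(\<lambda>\<omega>. u (G \<omega> (max 0 (min T ((of_int k + 1) / 2^m))))) \<in> borel_measurable N"
      using measurable_comp[OF meas ub] by (simp add: comp_def)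
    then show ?thesis by measurable
  qed
  have g: "(\<lambda>x::'w \<times> real. \<lfloor>2^m * snd x\<rfloor>) \<in> measurable (N \<Otimes>\<^sub>M lborel) (count_space UNIV)"
    by measurable
  show "(\<lambda>x. indicator {0..T} (snd x) * u (G (fst x) (pt T m (snd x)))) \<in> borel_measurable (N \<Otimes>\<^sub>M lborel)"
    using measurable_compose_countable[OF F g] unfolding pt_def by simp
next
  fix x :: "'w \<times> real"
  assume x: "x \<in> space (N \<Otimes>\<^sub>M lborel)"
  obtain \<omega> s where xs: "x = (\<omega>, s)" by (cases x)
  with x have w: "\<omega> \<in> space N" by (simp add: space_pair_measure)
  show "(\<lambda>m. indicator {0..T} (snd x) * u (G (fst x) (pt T m (snd x)))) \<longlonglongrightarrow> (case x of (\<omega>, s) \<Rightarrow> indicator {0..T} s * u (G \<omega> s))"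
  proof (cases "s \<in> {0..T}")
    case True
    have rc: "(G \<omega> \<longlongrightarrow> G \<omega> s) (at_right s)" using cad[OF w] True unfolding cadlag_def by auto
    have "(\<lambda>m. G \<omega> (pt T m s)) \<longlonglongrightarrow> G \<omega> s"
      using rc_seq[OF rc pt_lim] pt_bounds True by auto
    moreover have cu: "isCont u (G \<omega> s)" using u by (simp add: continuous_on_eq_continuous_at)
    ultimately have "(\<lambda>m. u (G \<omega> (pt T m s))) \<longlonglongrightarrow> u (G \<omega> s)"
      using isCont_tendsto_compose by blast
    then show ?thesis using xs True by (auto intro: tendsto_mult_left)
  next
    case False then show ?thesis using xs by simp
  qed
qed


lemma cadlag_comp:
  fixes f :: "real \<Rightarrow> 'e::metric_space"
  assumes u: "continuous_on UNIV u" and c: "cadlag f"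
  shows "cadlag (\<lambda>s. u (f s))"
proof -
  have cu: "\<And>x. isCont u x" using u by (simp add: continuous_on_eq_continuous_at)
  show ?thesis using c unfolding cadlag_def
    by (metis cu isCont_tendsto_compose)
qed

lemma cadlag_bdd:
  fixes v :: "real \<Rightarrow> real"
  assumes c: "cadlag v"
  shows "\<exists>B. \<forall>s\<in>{0..T}. \<bar>v s\<bar> \<le> B"
proof -
  have loc: "\<exists>d>0. \<exists>B. \<forall>y\<in>{0..T}. dist y s < d \<longrightarrow> \<bar>v y\<bar> \<le> B" if s: "s \<in> {0..T}" for s
  proof -
    have "(v \<longlongrightarrow> v s) (at_right s)" using c s unfolding cadlag_def by auto
    from tendstoD[OF this, of 1] obtain b where b: "b > s" "\<And>y. s < y \<Longrightarrow> y < b \<Longrightarrow> dist (v y) (v s) < 1"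
      using eventually_at_right[of s "s+1"] by auto
    show ?thesis
    proof (cases "s > 0")
      case True
      then obtain l where "(v \<longlongrightarrow> l) (at_left s)" using c unfolding cadlag_def by auto
      from tendstoD[OF this, of 1] obtain a where a: "a < s" "\<And>y. a < y \<Longrightarrow> y < s \<Longrightarrow> dist (v y) l < 1"
        using eventually_at_left[of "s-1" s] by auto
      have "\<forall>y\<in>{0..T}. dist y s < min (b - s) (s - a) \<longrightarrow> \<bar>v y\<bar> \<le> max (\<bar>v s\<bar> + 1) (\<bar>l\<bar> + 1)"
      proof (intro ballI impI)
        fix y assume y: "y \<in> {0..T}" "dist y s < min (b - s) (s - a)"
        then have "a < y" "y < b" by (auto simp: dist_real_def)
        consider "y = s" | "y < s" | "y > s" by linarith
        then show "\<bar>v y\<bar> \<le> max (\<bar>v s\<bar> + 1) (\<bar>l\<bar> + 1)"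
        proof cases
          case 2 then have "dist (v y) l < 1" using a \<open>a < y\<close> by auto
          then show ?thesis by (auto simp: dist_real_def)
        next
          case 3 then have "dist (v y) (v s) < 1" using b \<open>y < b\<close> by auto
          then show ?thesis by (auto simp: dist_real_def)
        qed auto
      qed
      moreover have "0 < min (b - s) (s - a)" using a b by simp
      ultimately show ?thesis by blast
    next
      case False
      with s have s0: "s = 0" by auto
      have "\<forall>y\<in>{0..T}. dist y s < b - s \<longrightarrow> \<bar>v y\<bar> \<le> \<bar>v s\<bar> + 1"
      proof (intro ballI impI)
        fix y assume y: "y \<in> {0..T}" "dist y s < b - s"
        then have "y < b" "s \<le> y" using s0 by (auto simp: dist_real_def)
        then consider "y = s" | "y > s" by linarith
        then show "\<bar>v y\<bar> \<le> \<bar>v s\<bar> + 1"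
        proof cases
          case 2 then have "dist (v y) (v s) < 1" using b \<open>y < b\<close> by auto
          then show ?thesis by (auto simp: dist_real_def)
        qed auto
      qed
      moreover have "0 < b - s" using b by simp
      ultimately show ?thesis by blast
    qed
  qed
  then obtain d B where dB: "\<And>s. s \<in> {0..T} \<Longrightarrow> d s > 0 \<and> (\<forall>y\<in>{0..T}. dist y s < d s \<longrightarrow> \<bar>v y\<bar> \<le> B s)"
    by metis
  have cov: "{0..T} \<subseteq> (\<Union>s\<in>{0..T}. ball s (d s))"
    using dB by force
  obtain K where K: "K \<subseteq> {0..T}" "finite K" "{0..T} \<subseteq> (\<Union>s\<in>K. ball s (d s))"
    using compactE_image[OF compact_Icc[of 0 T], of "{0..T}" "\<lambda>s. ball s (d s)"] cov by auto
  show ?thesis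
  proof (intro exI[of _ "Max (insert 0 (B ` K))"] ballI)
    fix y assume y: "y \<in> {0..T}"
    then obtain s where s: "s \<in> K" "y \<in> ball s (d s)" using K by auto
    then have "\<bar>v y\<bar> \<le> B s" using dB[of s] K y by (auto simp: dist_commute)
    also have "\<dots> \<le> Max (insert 0 (B ` K))" using s K by (intro Max_ge) auto
    finally show "\<bar>v y\<bar> \<le> Max (insert 0 (B ` K))" .
  qed
qed

lemma hk_eq_lebesgue:
  fixes v :: "real \<Rightarrow> real"
  assumes nn: "\<And>s. s \<in> {a..b} \<Longrightarrow> v s \<ge> 0"
    and m: "(\<lambda>s. indicator {a..b} s * v s) \<in> borel_measurable lborel"
  shows "integral {a..b} v = integral\<^sup>L lborel (\<lambda>s. indicator {a..b} s * v s)"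
proof (cases "set_integrable lborel {a..b} v")
  case True
  then show ?thesis using set_borel_integral_eq_integral(2)[OF True]
    by (simp add: set_lebesgue_integral_def)
next
  case False
  have "\<not> v integrable_on {a..b}"
  proof
    assume "v integrable_on {a..b}"
    then have "set_integrable lebesgue {a..b} v"
      using nonnegative_absolutely_integrable_1 nn by blast
    then have "integrable lborel (\<lambda>s. indicator {a..b} s * v s)"
      using integrable_completion[OF m] unfolding set_integrable_def by simp
    then show False using False unfolding set_integrable_def by simp
  qed
  then have "integral {a..b} v = 0" by (rule not_integrable_integral)
  moreover have "\<not> integrable lborel (\<lambda>s. indicator {a..b} s * v s)"
    using False unfolding set_integrable_def by simp
  ultimately show ?thesis by (simp add: not_integrable_integral_eq)
qed


definition innerL :: "('e \<Rightarrow> real) \<Rightarrow> real \<Rightarrow> (real \<Rightarrow> 'e) \<Rightarrow> real \<Rightarrow> real" where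
  "innerL mu t g s = integral\<^sup>L lborel (\<lambda>r. indicator {s..t} r * (indicator {0..t} r * mu (g r)))"

definition outerL :: "('e \<Rightarrow> real) \<Rightarrow> ('e \<Rightarrow> real) \<Rightarrow> ('e \<Rightarrow> real) \<Rightarrow> real \<Rightarrow> (real \<Rightarrow> 'e) \<Rightarrow> real" where
  "outerL lam kap mu t g = integral\<^sup>L lborel (\<lambda>s. indicator {0..t} s * lam (g s) *
      exp (- (indicator {0..t} s * kap (g s)) * innerL mu t g s))"

lemma single_meas:
  fixes g :: "real \<Rightarrow> 'e::metric_space" and u :: "'e \<Rightarrow> real"
  assumes u: "continuous_on UNIV u" and c: "cadlag g"
  shows "(\<lambda>s. indicator {0..T} s * u (g s)) \<in> borel_measurable lborel"
proof -
  have "(\<lambda>(\<omega>::unit,s). indicator {0..T} s * u ((\<lambda>_. g) \<omega> s)) \<in> borel_measurable (count_space UNIV \<Otimes>\<^sub>M lborel)"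
    by (rule joint_meas[where G="\<lambda>_. g", simplified]) (auto simp: c u)
  from measurable_Pair2[OF this, of "()"] show ?thesis by simp
qed

lemma innerL_meas_gen:
  fixes h :: "'a \<times> real \<Rightarrow> real"
  assumes h[measurable]: "h \<in> borel_measurable (N \<Otimes>\<^sub>M lborel)"
  shows "(\<lambda>(x,s). integral\<^sup>L lborel (\<lambda>r. indicator {s..t} r * h (x, r))) \<in> borel_measurable (N \<Otimes>\<^sub>M lborel)"
proof -
  have "(\<lambda>y. (if snd (fst y) \<le> snd y \<and> snd y \<le> t then 1 else 0) * h (fst (fst y), snd y)) \<in> borel_measurable ((N \<Otimes>\<^sub>M lborel) \<Otimes>\<^sub>M lborel)"
    by measurable
  also have "(\<lambda>y. (if snd (fst y) \<le> snd y \<and> snd y \<le> t then 1 else 0) * h (fst (fst y), snd y)) = case_prod (\<lambda>xs r. indicator {snd xs..t} r * h (fst xs, r))"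
    by (auto simp: fun_eq_iff indicator_def)
  finally have "(\<lambda>xs. integral\<^sup>L lborel (\<lambda>r. indicator {snd xs..t} r * h (fst xs, r))) \<in> borel_measurable (N \<Otimes>\<^sub>M lborel)"
    by (rule lborel.borel_measurable_lebesgue_integral)
  then show ?thesis by (simp add: case_prod_beta')
qed

lemma innerL_meas:
  fixes h :: "real \<Rightarrow> real"
  assumes h: "h \<in> borel_measurable lborel"
  shows "(\<lambda>s. integral\<^sup>L lborel (\<lambda>r. indicator {s..t} r * h r)) \<in> borel_measurable lborel"
proof -
  have "(\<lambda>x::unit\<times>real. h (snd x)) \<in> borel_measurable (count_space UNIV \<Otimes>\<^sub>M lborel)"
    using h by measurable
  from measurable_Pair2[OF innerL_meas_gen[OF this], of "()"] show ?thesis by simp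
qed

lemma phi_eq_outerL:
  fixes g :: "real \<Rightarrow> 'e::metric_space"
  assumes c: "cadlag g"
    and lam: "continuous_on UNIV lam" and kap: "continuous_on UNIV kap" and mu: "continuous_on UNIV mu"
    and lam0: "\<And>x. lam x \<ge> 0" and mu0: "\<And>x. mu x \<ge> 0"
  shows "phi lam kap mu t g = outerL lam kap mu t g"
proof -
  have mm: "(\<lambda>s. indicator {0..t} s * mu (g s)) \<in> borel_measurable lborel" by (rule single_meas[OF mu c])
  have ml: "(\<lambda>s. indicator {0..t} s * lam (g s)) \<in> borel_measurable lborel" by (rule single_meas[OF lam c])
  have mk: "(\<lambda>s. indicator {0..t} s * kap (g s)) \<in> borel_measurable lborel" by (rule single_meas[OF kap c])
  have mi: "innerL mu t g \<in> borel_measurable lborel"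
    using innerL_meas[OF mm, of t] unfolding innerL_def[abs_def] by simp
  have inner: "integral {s..t} (\<lambda>r. mu (g r)) = innerL mu t g s" if s: "s \<in> {0..t}" for s
  proof -
    have eq: "(\<lambda>r. indicator {s..t} r * mu (g r)) = (\<lambda>r. indicator {s..t} r * (indicator {0..t} r * mu (g r)))"
      using s by (auto simp: indicator_def fun_eq_iff)
    have M: "(\<lambda>r. indicator {s..t} r * mu (g r)) \<in> borel_measurable lborel"
      unfolding eq using mm by measurable
    have "integral {s..t} (\<lambda>r. mu (g r)) = integral\<^sup>L lborel (\<lambda>r. indicator {s..t} r * mu (g r))"
      by (rule hk_eq_lebesgue[OF _ M]) (simp add: mu0)
    also have "\<dots> = innerL mu t g s" unfolding innerL_def eq ..
    finally show ?thesis .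
  qed
  have "phi lam kap mu t g = integral {0..t} (\<lambda>s. lam (g s) * exp (- kap (g s) * innerL mu t g s))"
    unfolding phi_def by (rule integral_cong) (simp add: inner)
  also have "\<dots> = outerL lam kap mu t g"
  proof -
    have eq: "(\<lambda>s. indicator {0..t} s * (lam (g s) * exp (- kap (g s) * innerL mu t g s))) =
      (\<lambda>s. indicator {0..t} s * lam (g s) * exp (- (indicator {0..t} s * kap (g s)) * innerL mu t g s))"
      by (auto simp: indicator_def fun_eq_iff)
    have M: "(\<lambda>s. indicator {0..t} s * (lam (g s) * exp (- kap (g s) * innerL mu t g s))) \<in> borel_measurable lborel"
      unfolding eq using ml mk mi by measurable
    have "integral {0..t} (\<lambda>s. lam (g s) * exp (- kap (g s) * innerL mu t g s)) = integral\<^sup>L lborel (\<lambda>s. indicator {0..t} s * (lam (g s) * exp (- kap (g s) * innerL mu t g s)))"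
      by (rule hk_eq_lebesgue[OF _ M]) (simp add: lam0)
    also have "\<dots> = outerL lam kap mu t g" unfolding outerL_def eq ..
    finally show ?thesis .
  qed
  finally show ?thesis .
qed


lemma innerL_nonneg:
  assumes "\<And>x. mu x \<ge> (0::real)"
  shows "innerL mu t g s \<ge> 0"
  unfolding innerL_def by (rule integral_nonneg_AE) (auto simp: assms indicator_def)

lemma outer_meas:
  fixes g :: "real \<Rightarrow> 'e::metric_space"
  assumes c: "cadlag g"
    and lam: "continuous_on UNIV lam" and kap: "continuous_on UNIV kap" and mu: "continuous_on UNIV mu"
  shows "(\<lambda>s. indicator {0..t} s * lam (g s) * exp (- (indicator {0..t} s * kap (g s)) * innerL mu t g s)) \<in> borel_measurable lborel"
    and "\<And>s. (\<lambda>r. indicator {s..t} r * (indicator {0..t} r * mu (g r))) \<in> borel_measurable lborel"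
proof -
  have mm: "(\<lambda>s. indicator {0..t} s * mu (g s)) \<in> borel_measurable lborel" by (rule single_meas[OF mu c])
  have ml: "(\<lambda>s. indicator {0..t} s * lam (g s)) \<in> borel_measurable lborel" by (rule single_meas[OF lam c])
  have mk: "(\<lambda>s. indicator {0..t} s * kap (g s)) \<in> borel_measurable lborel" by (rule single_meas[OF kap c])
  have mi: "innerL mu t g \<in> borel_measurable lborel"
    using innerL_meas[OF mm, of t] unfolding innerL_def[abs_def] by simp
  show "(\<lambda>s. indicator {0..t} s * lam (g s) * exp (- (indicator {0..t} s * kap (g s)) * innerL mu t g s)) \<in> borel_measurable lborel"
    using ml mk mi by measurable
  show "\<And>s. (\<lambda>r. indicator {s..t} r * (indicator {0..t} r * mu (g r))) \<in> borel_measurable lborel"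
    using mm by measurable
qed

lemma outerL_conv:
  fixes f :: "nat \<Rightarrow> real \<Rightarrow> 'e::metric_space" and g :: "real \<Rightarrow> 'e"
  assumes cf: "\<And>k. cadlag (f k)" and cg: "cadlag g"
    and lam: "continuous_on UNIV lam" and kap: "continuous_on UNIV kap" and mu: "continuous_on UNIV mu"
    and lam0: "\<And>x. lam x \<ge> 0" and kap0: "\<And>x. kap x \<ge> 0" and mu0: "\<And>x. mu x \<ge> 0"
    and t0: "t \<ge> 0"
    and bd: "\<And>k s. s \<in> {0..t} \<Longrightarrow> lam (f k s) \<le> B \<and> mu (f k s) \<le> B"
    and conv: "AE s in lborel. s \<in> {0..t} \<longrightarrow> (\<lambda>k. f k s) \<longlonglongrightarrow> g s"
  shows "(\<lambda>k. outerL lam kap mu t (f k)) \<longlonglongrightarrow> outerL lam kap mu t g"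
proof -
  have cu: "\<And>u x. continuous_on UNIV u \<Longrightarrow> isCont u x" by (simp add: continuous_on_eq_continuous_at)
  have convu: "AE s in lborel. s \<in> {0..t} \<longrightarrow> (\<lambda>k. u (f k s)) \<longlonglongrightarrow> u (g s)" if u: "continuous_on UNIV u" for u :: "'e \<Rightarrow> real"
    using conv by eventually_elim (auto intro: isCont_tendsto_compose[OF cu[OF u]])
  have B0: "B \<ge> 0" using bd[of 0 0] mu0[of "f 0 0"] t0 by auto
  have wint: "integrable lborel (\<lambda>s. indicator {0..t} s * B)"
    by (intro integrable_mult_left integrable_real_indicator) (auto simp: t0)
  have inner: "(\<lambda>k. innerL mu t (f k) s) \<longlonglongrightarrow> innerL mu t g s" for s
    unfolding innerL_def
  proof (rule integral_dominated_convergence[OF outer_meas(2)[OF cg lam kap mu] outer_meas(2)[OF cf lam kap mu] wint])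
    show "AE x in lborel. (\<lambda>k. indicator {s..t} x * (indicator {0..t} x * mu (f k x))) \<longlonglongrightarrow> indicator {s..t} x * (indicator {0..t} x * mu (g x))"
      using convu[OF mu] by eventually_elim (auto simp: indicator_def)
    fix k
    show "AE x in lborel. norm (indicator {s..t} x * (indicator {0..t} x * mu (f k x))) \<le> indicator {0..t} x * B"
      using bd mu0 B0 by (auto simp: indicator_def abs_mult)
  qed
  show ?thesis
    unfolding outerL_def
  proof (rule integral_dominated_convergence[OF outer_meas(1)[OF cg lam kap mu] outer_meas(1)[OF cf lam kap mu] wint])
    show "AE x in lborel. (\<lambda>k. indicator {0..t} x * lam (f k x) * exp (- (indicator {0..t} x * kap (f k x)) * innerL mu t (f k) x))
      \<longlonglongrightarrow> indicator {0..t} x * lam (g x) * exp (- (indicator {0..t} x * kap (g x)) * innerL mu t g x)"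
      using convu[OF lam] convu[OF kap]
    proof eventually_elim
      case (elim x)
      show ?case
      proof (cases "x \<in> {0..t}")
        case True
        then show ?thesis using elim
          by (auto intro!: tendsto_intros inner)
      qed simp
    qed
    fix k
    show "AE x in lborel. norm (indicator {0..t} x * lam (f k x) * exp (- (indicator {0..t} x * kap (f k x)) * innerL mu t (f k) x)) \<le> indicator {0..t} x * B"
    proof (rule AE_I2)
      fix x
      have e: "exp (- (indicator {0..t} x * kap (f k x)) * innerL mu t (f k) x) \<le> 1"
        using innerL_nonneg[of mu t "f k" x, OF mu0] kap0[of "f k x"]
        by (auto simp: indicator_def)
      show "norm (indicator {0..t} x * lam (f k x) * exp (- (indicator {0..t} x * kap (f k x)) * innerL mu t (f k) x)) \<le> indicator {0..t} x * B"
      proof (cases "x \<in> {0..t}")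
        case True
        then have "lam (f k x) \<le> B" using bd by auto
        then have "lam (f k x) * exp (- (indicator {0..t} x * kap (f k x)) * innerL mu t (f k) x) \<le> B * 1"
          using e lam0[of "f k x"] by (intro mult_mono) auto
        then show ?thesis using True lam0[of "f k x"] by (simp add: abs_mult)
      qed simp
    qed
  qed
qed


lemma floor_eqI: "of_int i \<le> x \<Longrightarrow> x < of_int i + 1 \<Longrightarrow> \<lfloor>x::real\<rfloor> = i"
  by linarith

lemma approx_cadlag:
  fixes f :: "real \<Rightarrow> 'e::metric_space"
  assumes c: "cadlag f" and L0: "L \<ge> 0"
  shows "cadlag (\<lambda>s. f (pt L m s))"
  unfolding cadlag_def
proof (intro conjI allI impI)
  let ?h = "\<lambda>s. f (pt L m s)"
  have p: "(0::real) < 2^m" by simp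
  fix s :: real
  assume "s \<ge> 0"
  let ?b = "(of_int \<lfloor>2^m * s\<rfloor> + 1) / 2^m"
  have sb: "s < ?b" using p by (simp add: field_simps) linarith
  have "eventually (\<lambda>y. y \<in> {s<..<?b}) (at_right s)" by (rule eventually_at_right_real[OF sb])
  then have "eventually (\<lambda>y. ?h y = ?h s) (at_right s)"
  proof eventually_elim
    case (elim y)
    then have "s \<le> y" "y < ?b" by auto
    then have "2^m * s \<le> 2^m * y" "2^m * y < of_int \<lfloor>2^m * s\<rfloor> + 1"
      using p by (auto simp: field_simps)
    then have "\<lfloor>2^m * y\<rfloor> = \<lfloor>2^m * s\<rfloor>"
      by (intro floor_eqI) linarith+
    then show ?case unfolding pt_def by simp
  qed
  then show "(?h \<longlongrightarrow> ?h s) (at_right s)" by (rule tendsto_eventually)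
next
  let ?h = "\<lambda>s. f (pt L m s)"
  have p: "(0::real) < 2^m" by simp
  fix s :: real
  assume "s > 0"
  let ?c = "\<lceil>2^m * s\<rceil>"
  let ?a = "(of_int ?c - 1) / 2^m"
  have as: "?a < s" using p by (simp add: field_simps) linarith
  have "eventually (\<lambda>y. ?a < y \<and> y < s) (at_left s)"
    using eventually_at_left[of ?a s, OF as] as by auto
  then have "eventually (\<lambda>y. ?h y = f (max 0 (min L ((of_int (?c - 1) + 1) / 2^m)))) (at_left s)"
  proof eventually_elim
    case (elim y)
    then have "of_int ?c - 1 < 2^m * y" "2^m * y < 2^m * s"
      using p by (auto simp: field_simps)
    then have "\<lfloor>2^m * y\<rfloor> = ?c - 1"
      by (intro floor_eqI) (simp, linarith)
    then show ?case unfolding pt_def by simp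
  qed
  then show "\<exists>l. (?h \<longlongrightarrow> l) (at_left s)" by (blast intro: tendsto_eventually)
qed

lemma approx_step:
  fixes f :: "real \<Rightarrow> 'e::metric_space"
  assumes c: "cadlag f"
  shows "(\<lambda>s. f (pt (real n) m s)) \<in> step_funs"
  unfolding step_funs_def
proof (intro CollectI conjI approx_cadlag[OF c])
  have p: "(0::real) < 2^m" by simp
  let ?N = "n * 2^m"
  let ?ts = "\<lambda>i::nat. real i / 2^m"
  let ?al = "\<lambda>i::nat. f (min (real n) ((real i + 1) / 2^m))"
  show "\<exists>N ts \<alpha>. ts 0 = 0 \<and> (\<forall>i<N. ts i < ts (Suc i)) \<and>
     (\<forall>i<N. \<forall>s. ts i \<le> s \<and> s < ts (Suc i) \<longrightarrow> f (pt (real n) m s) = \<alpha> i) \<and>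
     (\<forall>s. ts N \<le> s \<longrightarrow> f (pt (real n) m s) = \<alpha> N)"
  proof (intro exI[of _ ?N] exI[of _ ?ts] exI[of _ ?al] conjI allI impI)
    show "?ts 0 = 0" by simp
    fix i assume "i < ?N"
    show "?ts i < ?ts (Suc i)" using p by (simp add: field_simps)
  next
    fix i s assume i: "i < ?N" and s: "?ts i \<le> s \<and> s < ?ts (Suc i)"
    then have "real i \<le> 2^m * s" "2^m * s < real i + 1" using p by (auto simp: field_simps)
    then have fl: "\<lfloor>2^m * s\<rfloor> = int i" by (intro floor_eqI) auto
    have "real i + 1 \<le> real n * 2^m" using i by (metis of_nat_less_iff of_nat_mult of_nat_numeral of_nat_power Suc_leI of_nat_le_iff of_nat_Suc add.commute)
    then have "(real i + 1) / 2^m \<le> real n" using p by (simp add: field_simps)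
    then show "f (pt (real n) m s) = ?al i" using fl unfolding pt_def by (simp add: min_def)
  next
    fix s assume s: "?ts ?N \<le> s"
    then have "real n \<le> s" using p by (simp add: field_simps)
    then have "real n * 2^m \<le> 2^m * s" using p by (simp add: field_simps)
    then have "real n * 2^m < of_int \<lfloor>2^m * s\<rfloor> + 1" by linarith
    then have "real n < (of_int \<lfloor>2^m * s\<rfloor> + 1) / 2^m" using p by (simp add: field_simps)
    moreover have "real n < (real (n * 2^m) + 1) / 2^m" using p by (simp add: field_simps)
    ultimately show "f (pt (real n) m s) = ?al ?N" unfolding pt_def by (simp add: min_def)
  qed
qed simp


lemma phi_cong:
  assumes "\<And>s. s \<in> {0..t} \<Longrightarrow> f s = g s"
  shows "phi lam kap mu t f = phi lam kap mu t g"
  unfolding phi_def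
proof (rule integral_cong)
  fix s assume s: "s \<in> {0..t}"
  have "integral {s..t} (\<lambda>r. mu (f r)) = integral {s..t} (\<lambda>r. mu (g r))"
    by (rule integral_cong) (use s assms in auto)
  then show "lam (f s) * exp (- kap (f s) * integral {s..t} (\<lambda>r. mu (f r))) =
    lam (g s) * exp (- kap (g s) * integral {s..t} (\<lambda>r. mu (g r)))"
    using assms[OF s] by simp
qed

lemma cadlag_in_closure:
  fixes f :: "real \<Rightarrow> 'e::metric_space"
  assumes c: "cadlag f"
    and lam: "continuous_on UNIV lam" and kap: "continuous_on UNIV kap" and mu: "continuous_on UNIV mu"
    and lam0: "\<And>x. lam x \<ge> 0" and kap0: "\<And>x. kap x \<ge> 0" and mu0: "\<And>x. mu x \<ge> 0"
    and t0: "t \<ge> 0"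
  shows "phi lam kap mu t f \<in> closure (phi lam kap mu t ` step_funs)"
proof -
  define L where "L = real (nat \<lceil>t\<rceil>)"
  have L: "t \<le> L" "0 \<le> L" unfolding L_def by linarith+
  define h where "h m = (\<lambda>s. f (pt L m s))" for m
  have hs: "h m \<in> step_funs" for m unfolding h_def L_def by (rule approx_step[OF c])
  have hc: "cadlag (h m)" for m unfolding h_def by (rule approx_cadlag[OF c L(2)])
  obtain Bl where Bl: "\<And>s. s \<in> {0..L} \<Longrightarrow> \<bar>lam (f s)\<bar> \<le> Bl"
    using cadlag_bdd[OF cadlag_comp[OF lam c], of L] by blast
  obtain Bm where Bm: "\<And>s. s \<in> {0..L} \<Longrightarrow> \<bar>mu (f s)\<bar> \<le> Bm"
    using cadlag_bdd[OF cadlag_comp[OF mu c], of L] by blast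
  have "(\<lambda>k. outerL lam kap mu t (h k)) \<longlonglongrightarrow> outerL lam kap mu t f"
  proof (rule outerL_conv[OF hc c lam kap mu lam0 kap0 mu0 t0, where B="max Bl Bm"])
    fix k s assume s: "s \<in> {0..t}"
    then have "pt L k s \<in> {0..L}" using pt_bounds[of s L k] L by auto
    then show "lam (h k s) \<le> max Bl Bm \<and> mu (h k s) \<le> max Bl Bm"
      using Bl Bm unfolding h_def by fastforce
  next
    show "AE s in lborel. s \<in> {0..t} \<longrightarrow> (\<lambda>k. h k s) \<longlonglongrightarrow> f s"
    proof (rule AE_I2, intro impI)
      fix s assume s: "s \<in> {0..t}"
      then have rc: "(f \<longlongrightarrow> f s) (at_right s)" using c unfolding cadlag_def by auto
      show "(\<lambda>k. h k s) \<longlonglongrightarrow> f s" unfolding h_def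
        using rc_seq[OF rc pt_lim] pt_bounds s L by auto
    qed
  qed
  moreover have "phi lam kap mu t (h k) = outerL lam kap mu t (h k)" for k
    by (rule phi_eq_outerL[OF hc lam kap mu lam0 mu0])
  moreover have "phi lam kap mu t f = outerL lam kap mu t f"
    by (rule phi_eq_outerL[OF c lam kap mu lam0 mu0])
  ultimately have "(\<lambda>k. phi lam kap mu t (h k)) \<longlonglongrightarrow> phi lam kap mu t f" by simp
  then show ?thesis unfolding closure_sequential using hs
    by (intro exI[of _ "\<lambda>k. phi lam kap mu t (h k)"] conjI) auto
qed

lemma splice_cadlag:
  fixes g :: "real \<Rightarrow> 'e::metric_space"
  assumes c: "cadlag g"
  shows "cadlag (\<lambda>s. if s < u then g s else e)"
  unfolding cadlag_def
proof (intro conjI allI impI)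
  let ?h = "\<lambda>s. if s < u then g s else e"
  fix s :: real assume s: "s \<ge> 0"
  show "(?h \<longlongrightarrow> ?h s) (at_right s)"
  proof (cases "s < u")
    case True
    have "eventually (\<lambda>y. y \<in> {s<..<u}) (at_right s)" by (rule eventually_at_right_real[OF True])
    then have ev: "eventually (\<lambda>y. g y = ?h y) (at_right s)" by eventually_elim auto
    have "(g \<longlongrightarrow> g s) (at_right s)" using c s unfolding cadlag_def by auto
    then show ?thesis using tendsto_cong[OF ev] True by simp
  next
    case False
    have "eventually (\<lambda>y. y > s) (at_right s)" by (rule eventually_at_right_less)
    then have "eventually (\<lambda>y. ?h y = ?h s) (at_right s)" by eventually_elim (use False in auto)
    then show ?thesis by (rule tendsto_eventually)
  qed
next
  let ?h = "\<lambda>s. if s < u then g s else e"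
  fix s :: real assume s: "s > 0"
  show "\<exists>l. (?h \<longlongrightarrow> l) (at_left s)"
  proof (cases "s \<le> u")
    case True
    obtain l where l: "(g \<longlongrightarrow> l) (at_left s)" using c s unfolding cadlag_def by auto
    have "eventually (\<lambda>y. y \<in> {s-1<..<s}) (at_left s)" by (rule eventually_at_left_real) simp
    then have ev: "eventually (\<lambda>y. g y = ?h y) (at_left s)" by eventually_elim (use True in auto)
    show ?thesis using tendsto_cong[OF ev] l by auto
  next
    case False
    have "eventually (\<lambda>y. y \<in> {u<..<s}) (at_left s)"
      using False by (intro eventually_at_left_real) auto
    then have "eventually (\<lambda>y. ?h y = e) (at_left s)" by eventually_elim auto
    then show ?thesis by (blast intro: tendsto_eventually)
  qed
qed

lemma cadlag_const: "cadlag (\<lambda>_. e)"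
  unfolding cadlag_def by auto

lemma connected_cadlag_image:
  fixes e :: "'e::metric_space"
  assumes lam: "continuous_on UNIV lam" and kap: "continuous_on UNIV kap" and mu: "continuous_on UNIV mu"
    and lam0: "\<And>x. lam x \<ge> 0" and kap0: "\<And>x. kap x \<ge> 0" and mu0: "\<And>x. mu x \<ge> 0"
    and t0: "t \<ge> 0"
  shows "connected (phi lam kap mu t ` {f :: real \<Rightarrow> 'e. cadlag f})"
proof -
  define sp where "sp g u = (\<lambda>s. if s < u then g s else e)" for g :: "real \<Rightarrow> 'e" and u
  define P where "P g = (\<lambda>u. phi lam kap mu t (sp g u))" for g
  have spc: "cadlag g \<Longrightarrow> cadlag (sp g u)" for g u unfolding sp_def by (rule splice_cadlag)
  have contP: "continuous_on {0..t+1} (P g)" if c: "cadlag g" for g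
  proof (rule continuous_on_sequentiallyI)
    obtain Bl where Bl: "\<And>s. s \<in> {0..t} \<Longrightarrow> \<bar>lam (g s)\<bar> \<le> Bl"
      using cadlag_bdd[OF cadlag_comp[OF lam c], of t] by blast
    obtain Bm where Bm: "\<And>s. s \<in> {0..t} \<Longrightarrow> \<bar>mu (g s)\<bar> \<le> Bm"
      using cadlag_bdd[OF cadlag_comp[OF mu c], of t] by blast
    fix x :: "nat \<Rightarrow> real" and a assume x: "x \<longlonglongrightarrow> a"
    have "(\<lambda>k. outerL lam kap mu t (sp g (x k))) \<longlonglongrightarrow> outerL lam kap mu t (sp g a)"
    proof (rule outerL_conv[OF spc[OF c] spc[OF c] lam kap mu lam0 kap0 mu0 t0, where B="max (max Bl Bm) (max (lam e) (mu e))"])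
      fix k s assume s: "s \<in> {0..t}"
      then show "lam (sp g (x k) s) \<le> max (max Bl Bm) (max (lam e) (mu e)) \<and> mu (sp g (x k) s) \<le> max (max Bl Bm) (max (lam e) (mu e))"
        using Bl[OF s] Bm[OF s] unfolding sp_def by auto
    next
      show "AE s in lborel. s \<in> {0..t} \<longrightarrow> (\<lambda>k. sp g (x k) s) \<longlonglongrightarrow> sp g a s"
        using AE_lborel_singleton[of a]
      proof eventually_elim
        case (elim s)
        show ?case
        proof (intro impI tendsto_eventually)
          show "eventually (\<lambda>k. sp g (x k) s = sp g a s) sequentially"
          proof (cases "s < a")
            case True
            have "eventually (\<lambda>k. x k > s) sequentially" using x True by (simp add: order_tendstoD(1))
            then show ?thesis by eventually_elim (use True in \<open>auto simp: sp_def\<close>)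
          next
            case False
            then have "s > a" using elim by auto
            have "eventually (\<lambda>k. x k < s) sequentially" using x \<open>s > a\<close> by (simp add: order_tendstoD(2))
            then show ?thesis by eventually_elim (use \<open>s > a\<close> in \<open>auto simp: sp_def\<close>)
          qed
        qed
      qed
    qed
    then show "(\<lambda>k. P g (x k)) \<longlonglongrightarrow> P g a"
      unfolding P_def using phi_eq_outerL[OF spc[OF c] lam kap mu lam0 mu0] by simp
  qed
  let ?F = "(\<lambda>g. P g ` {0..t+1}) ` {f. cadlag f}"
  have "connected (\<Union>?F)"
  proof (rule connected_Union)
    fix S assume "S \<in> ?F"
    then obtain g where "cadlag g" "S = P g ` {0..t+1}" by auto
    then show "connected S" using connected_continuous_image[OF contP] by auto
  next
    have "phi lam kap mu t (\<lambda>_. e) \<in> S" if "S \<in> ?F" for S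
    proof -
      from that obtain g where "S = P g ` {0..t+1}" by auto
      moreover have "P g 0 = phi lam kap mu t (\<lambda>_. e)"
        unfolding P_def sp_def by (rule phi_cong) auto
      ultimately show ?thesis using t0 by force
    qed
    then show "\<Inter>?F \<noteq> {}" by blast
  qed
  moreover have "\<Union>?F = phi lam kap mu t ` {f. cadlag f}"
  proof
    show "\<Union>?F \<subseteq> phi lam kap mu t ` {f. cadlag f}"
      unfolding P_def using spc by blast
    show "phi lam kap mu t ` {f. cadlag f} \<subseteq> \<Union>?F"
    proof
      fix y assume "y \<in> phi lam kap mu t ` {f. cadlag f}"
      then obtain g where g: "cadlag g" "y = phi lam kap mu t g" by auto
      have "P g (t+1) = y" unfolding P_def sp_def g(2) by (rule phi_cong) auto
      then have "y \<in> P g ` {0..t+1}" using t0 by (auto intro!: image_eqI[where x="t+1"])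
      then show "y \<in> \<Union>?F" using g by blast
    qed
  qed
  ultimately show ?thesis by simp
qed

lemma X_meas:
  fixes J :: "'w \<Rightarrow> real \<Rightarrow> 'e::metric_space"
  assumes lam: "continuous_on UNIV lam" and kap: "continuous_on UNIV kap" and mu: "continuous_on UNIV mu"
    and lam0: "\<And>x. lam x \<ge> 0" and mu0: "\<And>x. mu x \<ge> 0"
    and meas: "\<And>s. s \<ge> 0 \<Longrightarrow> (\<lambda>\<omega>. J \<omega> s) \<in> measurable M borel"
    and cad: "\<And>\<omega>. \<omega> \<in> space M \<Longrightarrow> cadlag (J \<omega>)"
  shows "(\<lambda>\<omega>. phi lam kap mu t (J \<omega>)) \<in> borel_measurable M"
proof -
  have jl[measurable]: "(\<lambda>(\<omega>,s). indicator {0..t} s * lam (J \<omega> s)) \<in> borel_measurable (M \<Otimes>\<^sub>M lborel)"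
    by (rule joint_meas[OF lam cad meas])
  have jk[measurable]: "(\<lambda>(\<omega>,s). indicator {0..t} s * kap (J \<omega> s)) \<in> borel_measurable (M \<Otimes>\<^sub>M lborel)"
    by (rule joint_meas[OF kap cad meas])
  have jm: "(\<lambda>(\<omega>,s). indicator {0..t} s * mu (J \<omega> s)) \<in> borel_measurable (M \<Otimes>\<^sub>M lborel)"
    by (rule joint_meas[OF mu cad meas])
  have ji[measurable]: "(\<lambda>(\<omega>,s). innerL mu t (J \<omega>) s) \<in> borel_measurable (M \<Otimes>\<^sub>M lborel)"
    using innerL_meas_gen[OF jm, of t] unfolding innerL_def by simp
  have H: "(\<lambda>(\<omega>,s). indicator {0..t} s * lam (J \<omega> s) * exp (- (indicator {0..t} s * kap (J \<omega> s)) * innerL mu t (J \<omega>) s))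
     \<in> borel_measurable (M \<Otimes>\<^sub>M lborel)"
  proof -
    have "(\<lambda>x. (case x of (\<omega>,s) \<Rightarrow> indicator {0..t} s * lam (J \<omega> s)) * exp (- (case x of (\<omega>,s) \<Rightarrow> indicator {0..t} s * kap (J \<omega> s)) * (case x of (\<omega>,s) \<Rightarrow> innerL mu t (J \<omega>) s)))
       \<in> borel_measurable (M \<Otimes>\<^sub>M lborel)" by measurable
    then show ?thesis by (simp add: case_prod_beta')
  qed
  have "(\<lambda>\<omega>. outerL lam kap mu t (J \<omega>)) \<in> borel_measurable M"
    unfolding outerL_def using lborel.borel_measurable_lebesgue_integral[OF H] by simp
  then show ?thesis
    by (rule measurable_cong[THEN iffD1, rotated]) (simp add: phi_eq_outerL[OF cad lam kap mu lam0 mu0])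
qed


lemma const_step: "(\<lambda>_. e) \<in> step_funs"
  unfolding step_funs_def using cadlag_const[of e]
  by (auto intro!: exI[of _ "0::nat"] exI[of _ "\<lambda>_. 0::real"])

theorem lemma5:
  fixes M :: "'w measure"
    and lam kap mu :: "'e::metric_space \<Rightarrow> real"
    and t :: real
    and J :: "'w \<Rightarrow> real \<Rightarrow> 'e"
    and Js :: "nat \<Rightarrow> 'w \<Rightarrow> real \<Rightarrow> 'e"
  assumes "prob_space M"
    and "continuous_on UNIV lam" "continuous_on UNIV kap" "continuous_on UNIV mu"
    and "\<And>x. lam x \<ge> 0" "\<And>x. kap x \<ge> 0" "\<And>x. mu x \<ge> 0"
    and "t \<ge> 0"
    and "\<And>s. s \<ge> 0 \<Longrightarrow> (\<lambda>\<omega>. J \<omega> s) \<in> measurable M borel"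
    and "\<And>\<omega>. \<omega> \<in> space M \<Longrightarrow> cadlag (J \<omega>)"
    and "\<And>n. Js n = J"
    and "phi lam kap mu t ` step_funs \<subseteq> Rset M lam kap mu t Js"
  shows "closed_interval (Rset M lam kap mu t Js)"
proof -
  note lam = assms(2) and kap = assms(3) and mu = assms(4)
    and lam0 = assms(5) and kap0 = assms(6) and mu0 = assms(7) and t0 = assms(8)
    and meas = assms(9) and cad = assms(10) and hyp = assms(12)
  interpret prob_space M by (rule assms(1))
  let ?P = "phi lam kap mu t"
  let ?X = "\<lambda>\<omega>. ?P (J \<omega>)"
  let ?R = "Rset M lam kap mu t Js"
  let ?S = "?P ` step_funs"
  let ?C = "?P ` {f :: real \<Rightarrow> 'e. cadlag f}"
  have R_eq: "?R = {\<gamma>. \<gamma> \<ge> 0 \<and> (\<forall>\<epsilon>>0. measure M {\<omega> \<in> space M. ?X \<omega> \<in> {\<gamma> - \<epsilon> <..< \<gamma> + \<epsilon>}} > 0)}"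
    unfolding Rset_def assms(11) by auto
  have Xm: "?X \<in> borel_measurable M"
    by (rule X_meas[OF lam kap mu lam0 mu0 meas cad])
  have setsM: "{\<omega> \<in> space M. ?X \<omega> \<in> {a<..<b}} \<in> sets M" for a b
  proof -
    have "{\<omega> \<in> space M. ?X \<omega> \<in> {a<..<b}} = ?X -` {a<..<b} \<inter> space M" by auto
    also have "\<dots> \<in> sets M" by (rule measurable_sets[OF Xm]) simp
    finally show ?thesis .
  qed
  have closedR: "closed ?R"
    unfolding closed_sequential_limits
  proof (intro allI impI, elim conjE)
    fix x :: "nat \<Rightarrow> real" and l assume xR: "\<forall>n. x n \<in> ?R" and xl: "x \<longlonglongrightarrow> l"
    have x0: "x n \<ge> 0" for n using xR R_eq by auto
    have "l \<ge> 0" by (rule LIMSEQ_le_const[OF xl]) (use x0 in auto)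
    moreover have "measure M {\<omega> \<in> space M. ?X \<omega> \<in> {l - \<epsilon> <..< l + \<epsilon>}} > 0" if e: "\<epsilon> > 0" for \<epsilon>
    proof -
      have "eventually (\<lambda>n. dist (x n) l < \<epsilon>/2) sequentially"
        using xl e by (auto dest!: tendstoD[of _ _ _ "\<epsilon>/2"])
      then obtain n where n: "dist (x n) l < \<epsilon>/2" by (meson eventually_sequentially order_refl)
      have n1: "l - \<epsilon>/2 < x n" and n2: "x n < l + \<epsilon>/2" using n unfolding dist_real_def abs_less_iff by linarith+
      have "0 < measure M {\<omega> \<in> space M. ?X \<omega> \<in> {x n - \<epsilon>/2 <..< x n + \<epsilon>/2}}"
        using xR R_eq e by auto
      also have "\<dots> \<le> measure M {\<omega> \<in> space M. ?X \<omega> \<in> {l - \<epsilon> <..< l + \<epsilon>}}"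
        by (rule finite_measure_mono[OF _ setsM]) (use n1 n2 in auto)
      finally show ?thesis .
    qed
    ultimately show "l \<in> ?R" using R_eq by auto
  qed
  have SC: "?S \<subseteq> ?C" unfolding step_funs_def by auto
  have CS: "?C \<subseteq> closure ?S"
    using cadlag_in_closure[OF _ lam kap mu lam0 kap0 mu0 t0] by auto
  have RS: "?R \<subseteq> closure ?S"
  proof
    fix \<gamma> assume g: "\<gamma> \<in> ?R"
    show "\<gamma> \<in> closure ?S"
      unfolding closure_approachable
    proof (intro allI impI)
      fix e :: real assume e: "e > 0"
      have "measure M {\<omega> \<in> space M. ?X \<omega> \<in> {\<gamma> - e/2 <..< \<gamma> + e/2}} > 0"
        using g R_eq e by auto
      then have "{\<omega> \<in> space M. ?X \<omega> \<in> {\<gamma> - e/2 <..< \<gamma> + e/2}} \<noteq> {}" by (metis less_irrefl measure_empty)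
      then obtain \<omega> where w: "\<omega> \<in> space M" "?X \<omega> \<in> {\<gamma> - e/2 <..< \<gamma> + e/2}" by blast
      have "?X \<omega> \<in> closure ?S" using CS cad[OF w(1)] by auto
      then obtain y where y: "y \<in> ?S" "dist y (?X \<omega>) < e/2"
        unfolding closure_approachable using e by (meson half_gt_zero)
      have y2: "y - ?X \<omega> < e/2" "?X \<omega> - y < e/2" using y(2) unfolding dist_real_def abs_less_iff by linarith+
      have w3: "\<gamma> - e/2 < ?X \<omega>" "?X \<omega> < \<gamma> + e/2" using w(2) by auto
      have "dist y \<gamma> < e" unfolding dist_real_def abs_less_iff using y2 w3 by (intro conjI; linarith)
      then show "\<exists>y\<in>?S. dist y \<gamma> < e" using y(1) by blast
    qed
  qed
  have SR: "closure ?S \<subseteq> ?R" by (rule closure_minimal[OF hyp closedR])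
  have Req: "?R = closure ?S" using RS SR by auto
  have "closure ?S = closure ?C"
  proof
    show "closure ?S \<subseteq> closure ?C" by (rule closure_mono[OF SC])
    show "closure ?C \<subseteq> closure ?S" using closure_minimal[OF CS] by simp
  qed
  moreover have "connected (closure ?C)"
    by (rule connected_imp_connected_closure[OF connected_cadlag_image[OF lam kap mu lam0 kap0 mu0 t0]])
  ultimately have "is_interval ?R" using Req is_interval_connected_1 by metis
  moreover have "?R \<noteq> {}" using hyp const_step by blast
  ultimately show ?thesis unfolding closed_interval_def using closedR by blast
qed

end
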